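(* Assume the standing hypotheses (H) below. Then the group $G:=\mathcal P^{-1}(\Omega)$ acts freely, properly discontinuously and cocompactly on $\mathbb{R}^p\times C$.
   Context: Bundle automorphisms: fix integers $p\ge q\ge1$, a simply connected manifold $C$ and a decomposition $\mathbb{R}^p=E^q\oplus E^{p-q}$ with $\dim E^q=q$. An automorphism of the trivial bundle $\mathbb{R}^p\times C\to C$ is a map $(a,x)\mapsto(Aa+f(x),\varphi(x))$ with $A\in\mathrm{GL}_p(\mathbb{R})$ (linear part), $f\in C^\infty(C,\mathbb{R}^p)$ (translation part), $\varphi\in\mathrm{Diff}(C)$. $\mathrm{Aut}^{\mathbb{Z}}_{E^q}(\mathbb{R}^p\times C\to C)$ is the set of those with $A\in\mathrm{GL}_p(\mathbb{Z})$ and the projection of $f$ onto $E^q$ parallel to $E^{p-q}$ constant. An automorphism of the trivial bundle $(S^1)^p\times C\to C$, $(S^1)^p=\mathbb{R}^p/\mathbb{Z}^p$, is a map $(\bar a,x)\mapsto(A\bar a+\bar f(x),\varphi(x))$ with $A\in\mathrm{GL}_p(\mathbb{Z})$, $\bar f\in C^\infty(C,(S^1)^p)$, $\varphi\in\mathrm{Diff}(C)$; each lifts to an automorphism of $\mathbb{R}^p\times C\to C$, lifts differing by translations by $\mathbb{Z}^p$. $\mathrm{Aut}_{E^q}((S^1)^p\times C\to C)$ is the set of those whose lifts lie in $\mathrm{Aut}^{\mathbb{Z}}_{E^q}(\mathbb{R}^p\times C\to C)$, and $\mathcal P:\mathrm{Aut}^{\mathbb{Z}}_{E^q}(\mathbb{R}^p\times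 C\to C)\to\mathrm{Aut}_{E^q}((S^1)^p\times C\to C)$ is the reduction modulo $\mathbb{Z}^p$. The linear part and the restriction $\omega|_C=\varphi$ of $\omega\in\mathrm{Aut}_{E^q}((S^1)^p\times C\to C)$ are well defined. Standing hypotheses (H): $p\ge2$ and $\Omega$ is a discrete subgroup of $\mathrm{Aut}_{E^q}((S^1)^p\times C\to C)$ such that (i) the action of $\Omega$ on $C$ given by $\omega\mapsto\omega|_C$ is proper and cocompact; (ii) the linear part of every $\omega\in\Omega$ preserves $E^q$ and $E^{p-q}$; (iii) there is a scalar product $g_{E^q}$ on $E^q$ such that the restriction to $E^q$ of the linear part of every $\omega\in\Omega$ is a similarity of $g_{E^q}$, not all of them isometries; (iv) if $\omega\in\Omega\setminus\{\mathrm{id}\}$ and $\omega|_C(x)=x$ for some $x\in C$, then no element of $\mathcal P^{-1}(\omega)$ has a fixed point in $\mathbb{R}^p\times\{x\}$. *)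

theory Defs
  imports "HOL-Analysis.Analysis" "HOL-Library.FuncSet"
begin

primrec Ck_on :: "nat \<Rightarrow> 'a::real_normed_vector set \<Rightarrow> ('a \<Rightarrow> 'b::real_normed_vector) \<Rightarrow> bool" where
  "Ck_on 0 U f = continuous_on U f"
| "Ck_on (Suc k) U f = (f differentiable_on U \<and> continuous_on U f \<and>
      (\<forall>v. Ck_on k U (\<lambda>x. frechet_derivative f (at x) v)))"

definition Cinf_on :: "'a::real_normed_vector set \<Rightarrow> ('a \<Rightarrow> 'b::real_normed_vector) \<Rightarrow> bool" where
  "Cinf_on U f \<longleftrightarrow> (\<forall>k. Ck_on k U f)"

definition smooth_map :: "'a::real_normed_vector set \<Rightarrow> ('a \<Rightarrow> 'b::real_normed_vector) \<Rightarrow> bool" where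
  "smooth_map C f \<longleftrightarrow> (\<forall>x\<in>C. \<exists>U F. open U \<and> x \<in> U \<and> Cinf_on U F \<and> (\<forall>y\<in>C \<inter> U. f y = F y))"

text \<open>A (smooth, embedded, boundaryless) submanifold of a Euclidean space.  By Whitney's
  embedding theorem every smooth manifold is diffeomorphic to one of these.\<close>
definition smooth_submanifold :: "'n::euclidean_space set \<Rightarrow> bool" where
  "smooth_submanifold C \<longleftrightarrow> (\<exists>d. \<forall>x\<in>C. \<exists>U V (\<phi>::'n \<Rightarrow> 'n) \<psi> S.
      open U \<and> open V \<and> x \<in> U \<and> \<phi> ` U = V \<and> \<psi> ` V = U \<and>
      (\<forall>y\<in>U. \<psi> (\<phi> y) = y) \<and> (\<forall>z\<in>V. \<phi> (\<psi> z) = z) \<and>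
      Cinf_on U \<phi> \<and> Cinf_on V \<psi> \<and>
      subspace S \<and> dim S = d \<and> \<phi> ` (C \<inter> U) = V \<inter> S)"

definition diffeo :: "'n::euclidean_space set \<Rightarrow> ('n \<Rightarrow> 'n) \<Rightarrow> bool" where
  "diffeo C \<phi> \<longleftrightarrow> bij_betw \<phi> C C \<and> smooth_map C \<phi> \<and> smooth_map C (inv_into C \<phi>)"

definition Zvec :: "(real^'p) set" where
  "Zvec = {v. \<forall>i. v $ i \<in> \<int>}"

definition GLZ :: "(real^'p^'p) set" where
  "GLZ = {A. (\<forall>i j. A $ i $ j \<in> \<int>) \<and> invertible A \<and> (\<forall>i j. matrix_inv A $ i $ j \<in> \<int>)}"

lemma Zvec_equivp: "equivp (\<lambda>a b :: real^'p. a - b \<in> Zvec)"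
proof (rule equivpI)
  show "reflp (\<lambda>a b :: real^'p. a - b \<in> Zvec)"
    by (rule reflpI) (simp add: Zvec_def)
  show "symp (\<lambda>a b :: real^'p. a - b \<in> Zvec)"
  proof (rule sympI)
    fix a b :: "real^'p" assume "a - b \<in> Zvec"
    then have h: "\<forall>i. a $ i - b $ i \<in> \<int>" by (simp add: Zvec_def)
    have "\<forall>i. b $ i - a $ i \<in> \<int>"
    proof
      fix i show "b $ i - a $ i \<in> \<int>" using Ints_minus[OF h[rule_format, of i]] by simp
    qed
    then show "b - a \<in> Zvec" by (simp add: Zvec_def)
  qed
  show "transp (\<lambda>a b :: real^'p. a - b \<in> Zvec)"
  proof (rule transpI)
    fix a b c :: "real^'p" assume "a - b \<in> Zvec" "b - c \<in> Zvec"
    then have h1: "\<forall>i. a $ i - b $ i \<in> \<int>" and h2: "\<forall>i. b $ i - c $ i \<in> \<int>"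
      by (simp_all add: Zvec_def)
    have "\<forall>i. a $ i - c $ i \<in> \<int>"
    proof
      fix i
      have "a $ i - c $ i = (a $ i - b $ i) + (b $ i - c $ i)" by simp
      then show "a $ i - c $ i \<in> \<int>" using Ints_add[OF h1[rule_format, of i] h2[rule_format, of i]] by simp
    qed
    then show "a - c \<in> Zvec" by (simp add: Zvec_def)
  qed
qed

quotient_type 'p torus = "real^('p::finite)" / "\<lambda>a b. a - b \<in> Zvec"
  by (rule Zvec_equivp)

definition torus0 :: "'p::finite torus" where "torus0 = abs_torus 0"

definition tdist :: "'p::finite torus \<Rightarrow> 'p torus \<Rightarrow> real" where
  "tdist u v = Inf {norm (a - b) | a b. abs_torus a = u \<and> abs_torus b = v}"

definition smooth_map_T :: "'n::euclidean_space set \<Rightarrow> ('n \<Rightarrow> 'p::finite torus) \<Rightarrow> bool" where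
  "smooth_map_T C fb \<longleftrightarrow> (\<forall>x\<in>C. \<exists>U (F::'n \<Rightarrow> real^'p). open U \<and> x \<in> U \<and> Cinf_on U F \<and>
      (\<forall>y\<in>C \<inter> U. fb y = abs_torus (F y)))"

text \<open>Automorphisms are represented as maps on R^p x C (resp. torus x C), with value
  undefined over points outside C, so that equality of automorphisms is equality of maps on
  the total space.\<close>

definition aut_R :: "'n::euclidean_space set \<Rightarrow> real^'p^'p \<Rightarrow> ('n \<Rightarrow> real^'p) \<Rightarrow> ('n \<Rightarrow> 'n)
    \<Rightarrow> ((real^'p) \<times> 'n \<Rightarrow> (real^'p) \<times> 'n)" where
  "aut_R C A f \<phi> = (\<lambda>(a, x). if x \<in> C then (A *v a + f x, \<phi> x) else undefined)"

definition aut_T :: "'n::euclidean_space set \<Rightarrow> real^'p^'p \<Rightarrow> ('n \<Rightarrow> 'p::finite torus) \<Rightarrow> ('n \<Rightarrow> 'n)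
    \<Rightarrow> ('p torus \<times> 'n \<Rightarrow> 'p torus \<times> 'n)" where
  "aut_T C A fb \<phi> = (\<lambda>(ab, x). if x \<in> C
      then (abs_torus (A *v rep_torus ab + rep_torus (fb x)), \<phi> x) else undefined)"

definition projE :: "(real^'p) set \<Rightarrow> (real^'p) set \<Rightarrow> real^'p \<Rightarrow> real^'p" where
  "projE E1 E2 v = (THE u. u \<in> E1 \<and> v - u \<in> E2)"

definition AutR :: "'n::euclidean_space set \<Rightarrow> ((real^'p) \<times> 'n \<Rightarrow> (real^'p) \<times> 'n) set" where
  "AutR C = {aut_R C A f \<phi> | A f \<phi>. invertible A \<and> smooth_map C f \<and> diffeo C \<phi>}"

definition AutZ_E :: "'n::euclidean_space set \<Rightarrow> (real^'p) set \<Rightarrow> (real^'p) set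
    \<Rightarrow> ((real^'p) \<times> 'n \<Rightarrow> (real^'p) \<times> 'n) set" where
  "AutZ_E C E1 E2 = {aut_R C A f \<phi> | A f \<phi>. A \<in> GLZ \<and> smooth_map C f \<and> diffeo C \<phi> \<and>
      (\<exists>c. \<forall>x\<in>C. projE E1 E2 (f x) = c)}"

definition AutT :: "'n::euclidean_space set \<Rightarrow> ('p::finite torus \<times> 'n \<Rightarrow> 'p torus \<times> 'n) set" where
  "AutT C = {aut_T C A fb \<phi> | A fb \<phi>. A \<in> GLZ \<and> smooth_map_T C fb \<and> diffeo C \<phi>}"

definition redP :: "'n::euclidean_space set \<Rightarrow> ((real^'p) \<times> 'n \<Rightarrow> (real^'p) \<times> 'n)
    \<Rightarrow> ('p::finite torus \<times> 'n \<Rightarrow> 'p torus \<times> 'n)" where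
  "redP C g = (\<lambda>(ab, x). if x \<in> C
      then (abs_torus (fst (g (rep_torus ab, x))), snd (g (rep_torus ab, x))) else undefined)"

definition AutT_E :: "'n::euclidean_space set \<Rightarrow> (real^'p) set \<Rightarrow> (real^'p) set
    \<Rightarrow> ('p::finite torus \<times> 'n \<Rightarrow> 'p torus \<times> 'n) set" where
  "AutT_E C E1 E2 = {\<omega> \<in> AutT C. \<forall>g \<in> AutR C. redP C g = \<omega> \<longrightarrow> g \<in> AutZ_E C E1 E2}"

definition linpartT :: "'n::euclidean_space set \<Rightarrow> ('p::finite torus \<times> 'n \<Rightarrow> 'p torus \<times> 'n) \<Rightarrow> real^'p^'p" where
  "linpartT C \<omega> = (SOME A. A \<in> GLZ \<and> (\<exists>fb \<phi>. smooth_map_T C fb \<and> diffeo C \<phi> \<and> \<omega> = aut_T C A fb \<phi>))"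

definition transT :: "('p::finite torus \<times> 'n \<Rightarrow> 'p torus \<times> 'n) \<Rightarrow> 'n \<Rightarrow> 'p torus" where
  "transT \<omega> x = fst (\<omega> (torus0, x))"

definition restrC :: "('p::finite torus \<times> 'n \<Rightarrow> 'p torus \<times> 'n) \<Rightarrow> 'n \<Rightarrow> 'n" where
  "restrC \<omega> x = snd (\<omega> (torus0, x))"

definition idT :: "'n::euclidean_space set \<Rightarrow> ('p::finite torus \<times> 'n \<Rightarrow> 'p torus \<times> 'n)" where
  "idT C = restrict id (UNIV \<times> C)"

definition idR :: "'n::euclidean_space set \<Rightarrow> ((real^'p) \<times> 'n \<Rightarrow> (real^'p) \<times> 'n)" where
  "idR C = restrict id (UNIV \<times> C)"

definition is_subgroup_T :: "'n::euclidean_space set \<Rightarrow> ('p::finite torus \<times> 'n \<Rightarrow> 'p torus \<times> 'n) set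
    \<Rightarrow> ('p torus \<times> 'n \<Rightarrow> 'p torus \<times> 'n) set \<Rightarrow> bool" where
  "is_subgroup_T C \<Omega> Aut \<longleftrightarrow> \<Omega> \<subseteq> Aut \<and> idT C \<in> \<Omega> \<and>
     (\<forall>\<omega>\<in>\<Omega>. \<forall>\<omega>'\<in>\<Omega>. compose (UNIV \<times> C) \<omega> \<omega>' \<in> \<Omega>) \<and>
     (\<forall>\<omega>\<in>\<Omega>. \<exists>\<omega>'\<in>\<Omega>. compose (UNIV \<times> C) \<omega> \<omega>' = idT C \<and> compose (UNIV \<times> C) \<omega>' \<omega> = idT C)"

text \<open>Discreteness with respect to the compact-open topology (uniform convergence on
  compact subsets of C of the translation part and of the restriction to C; the linear part
  ranges over the discrete set GL_p(Z)).\<close>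
definition discrete_T :: "'n::euclidean_space set \<Rightarrow> ('p::finite torus \<times> 'n \<Rightarrow> 'p torus \<times> 'n) set \<Rightarrow> bool" where
  "discrete_T C \<Omega> \<longleftrightarrow> (\<forall>\<omega>\<in>\<Omega>. \<exists>K e. compact K \<and> K \<subseteq> C \<and> e > 0 \<and>
     (\<forall>\<omega>'\<in>\<Omega>. linpartT C \<omega>' = linpartT C \<omega> \<and>
        (\<forall>x\<in>K. tdist (transT \<omega>' x) (transT \<omega> x) < e \<and> dist (restrC \<omega>' x) (restrC \<omega> x) < e)
        \<longrightarrow> \<omega>' = \<omega>))"

text \<open>Proper (for a discrete group) and cocompact action on C via omega |-> omega|_C.\<close>
definition proper_on_C :: "'n::euclidean_space set \<Rightarrow> ('p::finite torus \<times> 'n \<Rightarrow> 'p torus \<times> 'n) set \<Rightarrow> bool" where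
  "proper_on_C C \<Omega> \<longleftrightarrow> (\<forall>K. compact K \<and> K \<subseteq> C \<longrightarrow> finite {\<omega>\<in>\<Omega>. restrC \<omega> ` K \<inter> K \<noteq> {}})"

definition cocompact_on_C :: "'n::euclidean_space set \<Rightarrow> ('p::finite torus \<times> 'n \<Rightarrow> 'p torus \<times> 'n) set \<Rightarrow> bool" where
  "cocompact_on_C C \<Omega> \<longleftrightarrow> (\<exists>K. compact K \<and> K \<subseteq> C \<and> C = (\<Union>\<omega>\<in>\<Omega>. restrC \<omega> ` K))"

definition scalar_product_on :: "(real^'p) set \<Rightarrow> (real^'p \<Rightarrow> real^'p \<Rightarrow> real) \<Rightarrow> bool" where
  "scalar_product_on E g \<longleftrightarrow>
     (\<forall>x\<in>E. \<forall>y\<in>E. g x y = g y x) \<and>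
     (\<forall>x\<in>E. \<forall>y\<in>E. \<forall>z\<in>E. g (x + y) z = g x z + g y z) \<and>
     (\<forall>x\<in>E. \<forall>z\<in>E. \<forall>c. g (c *\<^sub>R x) z = c * g x z) \<and>
     (\<forall>x\<in>E. x \<noteq> 0 \<longrightarrow> g x x > 0)"

definition similarity_on :: "(real^'p) set \<Rightarrow> (real^'p \<Rightarrow> real^'p \<Rightarrow> real) \<Rightarrow> real^'p^'p \<Rightarrow> bool" where
  "similarity_on E g A \<longleftrightarrow> (\<exists>r>0. \<forall>x\<in>E. \<forall>y\<in>E. g (A *v x) (A *v y) = r * g x y)"

definition isometry_on :: "(real^'p) set \<Rightarrow> (real^'p \<Rightarrow> real^'p \<Rightarrow> real) \<Rightarrow> real^'p^'p \<Rightarrow> bool" where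
  "isometry_on E g A \<longleftrightarrow> (\<forall>x\<in>E. \<forall>y\<in>E. g (A *v x) (A *v y) = g x y)"

definition acts_freely :: "'n::euclidean_space set \<Rightarrow> ((real^'p) \<times> 'n \<Rightarrow> (real^'p) \<times> 'n) set \<Rightarrow> bool" where
  "acts_freely C G \<longleftrightarrow> (\<forall>g\<in>G. \<forall>a. \<forall>x\<in>C. g (a, x) = (a, x) \<longrightarrow> g = idR C)"

definition acts_properly_discontinuously :: "'n::euclidean_space set \<Rightarrow> ((real^'p) \<times> 'n \<Rightarrow> (real^'p) \<times> 'n) set \<Rightarrow> bool" where
  "acts_properly_discontinuously C G \<longleftrightarrow>
     (\<forall>K. compact K \<and> K \<subseteq> UNIV \<times> C \<longrightarrow> finite {g\<in>G. g ` K \<inter> K \<noteq> {}})"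

definition acts_cocompactly :: "'n::euclidean_space set \<Rightarrow> ((real^'p) \<times> 'n \<Rightarrow> (real^'p) \<times> 'n) set \<Rightarrow> bool" where
  "acts_cocompactly C G \<longleftrightarrow> (\<exists>K. compact K \<and> K \<subseteq> UNIV \<times> C \<and> UNIV \<times> C = (\<Union>g\<in>G. g ` K))"

end

theory Submission
  imports Defs
begin


lemma tq_abs_rep: "abs_torus (rep_torus t) = t"
  by (rule Quotient3_abs_rep[OF Quotient3_torus])

lemma tq_eq: "abs_torus a = abs_torus b \<longleftrightarrow> a - b \<in> Zvec"
  using Quotient3_rel[OF Quotient3_torus, of a b] Zvec_equivp
  by (metis (mono_tags, lifting) equivp_reflp)

lemma tq_rep_abs: "rep_torus (abs_torus a) - a \<in> Zvec"
  using tq_eq[of "rep_torus (abs_torus a)" a] tq_abs_rep by metis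

lemma Zvec_iff: "v \<in> Zvec \<longleftrightarrow> (\<forall>i. v $ i \<in> \<int>)" by (simp add: Zvec_def)

lemma Zvec_0[simp]: "0 \<in> Zvec" by (simp add: Zvec_def)
lemma Zvec_add: "a \<in> Zvec \<Longrightarrow> b \<in> Zvec \<Longrightarrow> a + b \<in> Zvec" by (simp add: Zvec_def)
lemma Zvec_diff: "a \<in> Zvec \<Longrightarrow> b \<in> Zvec \<Longrightarrow> a - b \<in> Zvec" by (simp add: Zvec_def)
lemma Zvec_minus: "a \<in> Zvec \<Longrightarrow> - a \<in> Zvec" by (simp add: Zvec_def)

lemma Zvec_mult: assumes "\<forall>i j. A $ i $ j \<in> \<int>" "v \<in> Zvec" shows "A *v v \<in> Zvec"
  using assms by (auto simp: Zvec_def matrix_vector_mult_def intro!: Ints_sum Ints_mult)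

lemma GLZ_int: "A \<in> GLZ \<Longrightarrow> \<forall>i j. A $ i $ j \<in> \<int>" by (simp add: GLZ_def)

lemma Zvec_small: assumes "v \<in> Zvec" "norm v < 1" shows "v = 0"
proof -
  have "\<forall>i. v $ i = 0"
  proof
    fix i
    have "\<bar>v $ i\<bar> < 1" using component_le_norm_cart[of v i] assms(2) by simp
    then show "v $ i = 0" using assms(1) Ints_nonzero_abs_less1 by (auto simp: Zvec_def)
  qed
  then show ?thesis by (simp add: vec_eq_iff)
qed

lemma Zvec_bounded_finite: assumes "bounded B" shows "finite (Zvec \<inter> B)"
proof -
  have "uniform_discrete (Zvec \<inter> B)"
    unfolding uniform_discrete_def
  proof (intro exI[of _ 1] conjI ballI impI)
    fix x y assume "x \<in> Zvec \<inter> B" "y \<in> Zvec \<inter> B" "dist x y < (1::real)"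
    then have "x - y = 0" using Zvec_small[of "x - y"] Zvec_diff by (auto simp: dist_norm)
    then show "x = y" by simp
  qed simp
  moreover have "bounded (Zvec \<inter> B)" using assms by (rule bounded_subset) auto
  ultimately show ?thesis using uniform_discrete_finite_iff by blast
qed

lemma mat_zero_if_Zvec:
  fixes M :: "real^'p^'q"
  assumes "\<And>v. M *v v \<in> Zvec" shows "M = 0"
proof -
  have "M $ i $ j = 0" for i j
  proof -
    define m where "m = M $ i $ j"
    define t where "t = 1 / (2 * (\<bar>m\<bar> + 1))"
    have tpos: "t > 0" by (simp add: t_def add_pos_nonneg)
    have "(M *v axis j t) $ i = m * t"
      by (simp add: matrix_vector_mult_def axis_def m_def if_distrib cong: if_cong)
    then have "m * t \<in> \<int>" using assms[of "axis j t"] by (metis Zvec_iff)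
    moreover have "\<bar>m * t\<bar> < 1"
    proof -
      have "\<bar>m * t\<bar> = \<bar>m\<bar> / (2 * (\<bar>m\<bar> + 1))" by (simp add: t_def abs_mult)
      also have "\<dots> < 1" by (simp add: field_simps)
      finally show ?thesis .
    qed
    ultimately have "m * t = 0" using Ints_nonzero_abs_less1 by blast
    then show ?thesis using tpos m_def by simp
  qed
  then show ?thesis by (simp add: vec_eq_iff)
qed



lemma cont_on_local:
  fixes f :: "'a::metric_space \<Rightarrow> 'b::metric_space"
  assumes "\<And>x. x \<in> C \<Longrightarrow> \<exists>U G. open U \<and> x \<in> U \<and> continuous_on U G \<and> (\<forall>y\<in>C \<inter> U. f y = G y)"
  shows "continuous_on C f"
proof (rule continuous_on_eq_continuous_within[THEN iffD2], intro ballI)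
  fix x assume x: "x \<in> C"
  obtain U G where U: "open U" "x \<in> U" "continuous_on U G" "\<forall>y\<in>C \<inter> U. f y = G y"
    using assms[OF x] by blast
  have "continuous (at x) G" using U continuous_on_eq_continuous_at by blast
  then have "continuous (at x within C \<inter> U) G" using continuous_at_imp_continuous_within by blast
  then have c1: "continuous (at x within C \<inter> U) f"
    by (rule continuous_transform_within[of _ _ _ 1]) (use U x in auto)
  have "at x within C \<inter> U = at x within C"
    by (rule at_within_nhd[of x U]) (use U in auto)
  then show "continuous (at x within C) f" using c1 by simp
qed

lemma smooth_map_cont: assumes "smooth_map C f" shows "continuous_on C f"
proof (rule cont_on_local)
  fix x assume "x \<in> C"
  then obtain U F where "open U" "x \<in> U" "Cinf_on U F" "\<forall>y\<in>C \<inter> U. f y = F y"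
    using assms unfolding smooth_map_def by blast
  moreover have "continuous_on U F" using \<open>Cinf_on U F\<close> unfolding Cinf_on_def
    by (metis Ck_on.simps(1))
  ultimately show "\<exists>U G. open U \<and> x \<in> U \<and> continuous_on U G \<and> (\<forall>y\<in>C \<inter> U. f y = G y)" by blast
qed

lemma frechet_cong_open:
  assumes "open U" "x \<in> U" "\<And>y. y \<in> U \<Longrightarrow> f y = g y"
  shows "frechet_derivative f (at x) = frechet_derivative g (at x)"
proof -
  have "(\<lambda>D. (f has_derivative D) (at x)) = (\<lambda>D. (g has_derivative D) (at x))"
  proof (rule ext, rule iffI)
    fix D assume "(f has_derivative D) (at x)"
    then show "(g has_derivative D) (at x)"
      by (rule has_derivative_transform_within_open[OF _ assms(1,2)]) (use assms(3) in auto)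
  next
    fix D assume "(g has_derivative D) (at x)"
    then show "(f has_derivative D) (at x)"
      by (rule has_derivative_transform_within_open[OF _ assms(1,2)]) (use assms(3) in auto)
  qed
  then show ?thesis unfolding frechet_derivative_def by simp
qed

lemma diff_on_cong_open:
  assumes "open U" "\<And>y. y \<in> U \<Longrightarrow> f y = g y"
  shows "f differentiable_on U \<longleftrightarrow> g differentiable_on U"
proof -
  have "f differentiable (at x) \<longleftrightarrow> g differentiable (at x)" if "x \<in> U" for x
    unfolding differentiable_def
    using has_derivative_transform_within_open[OF _ assms(1) that, of f _ UNIV g]
      has_derivative_transform_within_open[OF _ assms(1) that, of g _ UNIV f] assms(2) by metis
  then show ?thesis using assms(1) by (simp add: differentiable_on_eq_differentiable_at)
qed

lemma Ck_cong:
  assumes "open U" "\<And>y. y \<in> U \<Longrightarrow> f y = g y"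
  shows "Ck_on k U f = Ck_on k U g"
  using assms(2)
proof (induction k arbitrary: f g)
  case 0
  then show ?case using continuous_on_cong by auto
next
  case (Suc k)
  have d: "f differentiable_on U \<longleftrightarrow> g differentiable_on U"
    using Suc.prems diff_on_cong_open[OF assms(1)] by metis
  have c: "continuous_on U f \<longleftrightarrow> continuous_on U g"
    using Suc.prems continuous_on_cong by auto
  have "Ck_on k U (\<lambda>x. frechet_derivative f (at x) v) = Ck_on k U (\<lambda>x. frechet_derivative g (at x) v)" for v
    by (rule Suc.IH) (use frechet_cong_open[OF assms(1) _ Suc.prems] in auto)
  then show ?case using d c by simp
qed

lemma Ck_subset:
  assumes "open W" "W \<subseteq> U" "Ck_on k U f"
  shows "Ck_on k W f"
  using assms(3)
proof (induction k arbitrary: f)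
  case 0
  then show ?case using continuous_on_subset assms(2) by auto
next
  case (Suc k)
  then show ?case using continuous_on_subset differentiable_on_subset assms(2) by auto
qed

lemma Ck_add_const:
  assumes "open U" "Ck_on k U f"
  shows "Ck_on k U (\<lambda>x. f x + c)"
  using assms(2)
proof (induction k arbitrary: f)
  case 0
  then show ?case by (auto intro!: continuous_intros)
next
  case (Suc k)
  have dif: "f differentiable_on U" and cf: "continuous_on U f"
    and h: "\<And>v. Ck_on k U (\<lambda>x. frechet_derivative f (at x) v)" using Suc.prems by auto
  have eq: "frechet_derivative (\<lambda>x. f x + c) (at x) = frechet_derivative f (at x)" if "x \<in> U" for x
  proof -
    have "f differentiable (at x)" using dif that assms(1)
      by (simp add: differentiable_on_eq_differentiable_at)
    then have "((\<lambda>x. f x + c) has_derivative frechet_derivative f (at x)) (at x)"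
      using frechet_derivative_works by (metis add_0_right has_derivative_add_const)
    then show ?thesis using frechet_derivative_at by metis
  qed
  have "Ck_on k U (\<lambda>x. frechet_derivative (\<lambda>x. f x + c) (at x) v)" for v
    using Ck_cong[OF assms(1), of "\<lambda>x. frechet_derivative (\<lambda>x. f x + c) (at x) v"
        "\<lambda>x. frechet_derivative f (at x) v" k] eq h by simp
  moreover have "(\<lambda>x. f x + c) differentiable_on U" using dif by (auto intro!: derivative_intros)
  moreover have "continuous_on U (\<lambda>x. f x + c)" using cf by (auto intro!: continuous_intros)
  ultimately show ?case by simp
qed

lemma Cinf_subset: "open W \<Longrightarrow> W \<subseteq> U \<Longrightarrow> Cinf_on U f \<Longrightarrow> Cinf_on W f"
  unfolding Cinf_on_def using Ck_subset by blast

lemma Cinf_add_const: "open U \<Longrightarrow> Cinf_on U f \<Longrightarrow> Cinf_on U (\<lambda>x. f x + c)"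
  unfolding Cinf_on_def using Ck_add_const by blast

lemma smooth_map_add_const: assumes "smooth_map C f" shows "smooth_map C (\<lambda>x. f x + c)"
  unfolding smooth_map_def
proof
  fix x assume "x \<in> C"
  then obtain U F where "open U" "x \<in> U" "Cinf_on U F" "\<forall>y\<in>C \<inter> U. f y = F y"
    using assms unfolding smooth_map_def by blast
  then show "\<exists>U F. open U \<and> x \<in> U \<and> Cinf_on U F \<and> (\<forall>y\<in>C \<inter> U. f y + c = F y)"
    by (intro exI[of _ U] exI[of _ "\<lambda>y. F y + c"]) (auto intro: Cinf_add_const)
qed



lemma Cinf_cont: "Cinf_on U f \<Longrightarrow> continuous_on U f"
  unfolding Cinf_on_def by (metis Ck_on.simps(1))

lemma submanifold_lpc:
  fixes C :: "'n::euclidean_space set"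
  assumes "smooth_submanifold C"
  shows "locally path_connected C"
  unfolding locally_def
proof (intro allI impI)
  fix w x assume wx: "openin (top_of_set C) w \<and> x \<in> w"
  then have xC: "x \<in> C" using openin_imp_subset by blast
  obtain d where "\<forall>x\<in>C. \<exists>U V (\<phi>::'n \<Rightarrow> 'n) \<psi> S.
      open U \<and> open V \<and> x \<in> U \<and> \<phi> ` U = V \<and> \<psi> ` V = U \<and>
      (\<forall>y\<in>U. \<psi> (\<phi> y) = y) \<and> (\<forall>z\<in>V. \<phi> (\<psi> z) = z) \<and>
      Cinf_on U \<phi> \<and> Cinf_on V \<psi> \<and>
      subspace S \<and> dim S = d \<and> \<phi> ` (C \<inter> U) = V \<inter> S"
    using assms[unfolded smooth_submanifold_def] by (elim exE) assumption
  from this[rule_format, OF xC] obtain U V and \<phi> \<psi> :: "'n \<Rightarrow> 'n" and S where ch: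
      "open U" "open V" "x \<in> U" "\<phi> ` U = V" "\<psi> ` V = U"
      "\<forall>y\<in>U. \<psi> (\<phi> y) = y" "\<forall>z\<in>V. \<phi> (\<psi> z) = z"
      "Cinf_on U \<phi>" "Cinf_on V \<psi>" "subspace S" "\<phi> ` (C \<inter> U) = V \<inter> S"
    by (elim exE conjE) (rule that; assumption)
  define T where "T = C \<inter> U"
  have psiim: "\<psi> ` (V \<inter> S) = T"
  proof -
    have "\<psi> ` (V \<inter> S) = \<psi> ` \<phi> ` (C \<inter> U)" using ch(11) by simp
    also have "\<dots> = (\<lambda>y. \<psi> (\<phi> y)) ` (C \<inter> U)" by (simp add: image_image)
    also have "\<dots> = C \<inter> U" using ch(6) by (auto simp: image_iff)
    finally show ?thesis by (simp add: T_def)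
  qed
  have hom: "homeomorphism T (V \<inter> S) \<phi> \<psi>"
    unfolding homeomorphism_def
  proof (intro conjI)
    show "\<forall>x\<in>T. \<psi> (\<phi> x) = x" using ch(6) by (simp add: T_def)
    show "\<phi> ` T = V \<inter> S" using ch(11) by (simp add: T_def)
    show "continuous_on T \<phi>" using Cinf_cont[OF ch(8)] by (rule continuous_on_subset) (simp add: T_def)
    show "\<forall>y\<in>V \<inter> S. \<phi> (\<psi> y) = y" using ch(7) by simp
    show "\<psi> ` (V \<inter> S) = T" by (rule psiim)
    show "continuous_on (V \<inter> S) \<psi>" using Cinf_cont[OF ch(9)] by (rule continuous_on_subset) simp
  qed
  have "locally path_connected S" using convex_imp_locally_path_connected subspace_imp_convex ch(10) by blast
  then have "locally path_connected (V \<inter> S)"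
    using locally_open_subset[of path_connected S "S \<inter> V"] openin_open_Int[OF ch(2), of S]
    by (simp add: Int_commute)
  then have lT: "locally path_connected T"
    using homeomorphism_locally[OF hom, of path_connected path_connected]
    using homeomorphic_path_connectedness homeomorphic_def by blast
  obtain Ow where Ow_def: "open Ow" "w = C \<inter> Ow" using wx by (auto simp: openin_open)
  have "w \<inter> U = T \<inter> Ow" using Ow_def by (auto simp: T_def)
  then have o1: "openin (top_of_set T) (w \<inter> U)" using openin_open_Int[OF Ow_def(1), of T] by simp
  have x1: "x \<in> w \<inter> U" using wx ch(3) by blast
  from lT[unfolded locally_def, rule_format, OF conjI[OF o1 x1]]
  obtain u v where uv: "openin (top_of_set T) u" "path_connected v" "x \<in> u" "u \<subseteq> v" "v \<subseteq> w \<inter> U"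
    by (elim exE conjE) (rule that; assumption)
  have "openin (top_of_set C) T" using openin_open_Int[OF ch(1)] by (simp add: T_def)
  then have "openin (top_of_set C) u" using uv(1) openin_trans by metis
  then show "\<exists>u v. openin (top_of_set C) u \<and> path_connected v \<and> x \<in> u \<and> u \<subseteq> v \<and> v \<subseteq> w"
    using uv by blast
qed



lemma exp_int_shift:
  assumes "n \<in> \<int>"
  shows "exp (2 * of_real pi * \<i> * complex_of_real (a + n)) = exp (2 * of_real pi * \<i> * complex_of_real a)"
proof -
  obtain m where m: "n = of_int m" using assms Ints_cases by blast
  have "2 * of_real pi * \<i> * complex_of_real (a + n) = 2 * of_real pi * \<i> * complex_of_real a + \<i> * (complex_of_int m * (complex_of_real pi * 2))"
    by (simp add: m algebra_simps)
  then show ?thesis using exp_plus_2pin by simp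
qed

lemma torus_lift:
  fixes fb :: "'n::euclidean_space \<Rightarrow> 'p::finite torus"
  assumes sm: "smooth_map_T C fb" and sc: "simply_connected C" and lpc: "locally path_connected C"
  shows "\<exists>f. smooth_map C f \<and> (\<forall>y\<in>C. f y - rep_torus (fb y) \<in> Zvec)"
proof -
  define u where "u j y = exp (2 * of_real pi * \<i> * complex_of_real (rep_torus (fb y) $ j))" for j y
  have ucont: "continuous_on C (u j)" for j
  proof (rule cont_on_local)
    fix x assume "x \<in> C"
    then obtain U and F :: "'n \<Rightarrow> real^'p" where UF: "open U" "x \<in> U" "Cinf_on U F" "\<forall>y\<in>C \<inter> U. fb y = abs_torus (F y)"
      using sm unfolding smooth_map_T_def by blast
    define G where "G y = exp (2 * of_real pi * \<i> * complex_of_real (F y $ j))" for y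
    have "continuous_on U G" unfolding G_def using Cinf_cont[OF UF(3)]
      by (auto intro!: continuous_intros continuous_on_component)
    moreover have "\<forall>y\<in>C \<inter> U. u j y = G y"
    proof
      fix y assume y: "y \<in> C \<inter> U"
      have "rep_torus (fb y) - F y \<in> Zvec" using UF(4) y tq_rep_abs by metis
      then have "rep_torus (fb y) $ j - F y $ j \<in> \<int>" by (simp add: Zvec_def)
      then have "u j y = exp (2 * of_real pi * \<i> * complex_of_real (F y $ j + (rep_torus (fb y) $ j - F y $ j)))"
        unfolding u_def by simp
      also have "\<dots> = G y" unfolding G_def by (rule exp_int_shift) fact
      finally show "u j y = G y" .
    qed
    ultimately show "\<exists>U G. open U \<and> x \<in> U \<and> continuous_on U G \<and> (\<forall>y\<in>C \<inter> U. u j y = G y)"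
      using UF by blast
  qed
  have "\<exists>g. continuous_on C g \<and> (\<forall>y\<in>C. exp (g y) = u j y)" for j
  proof -
    have "u j \<in> C \<rightarrow> - {0}" by (auto simp: u_def)
    then obtain g where "continuous_on C g" "g \<in> C \<rightarrow> UNIV" "\<And>y. y \<in> C \<Longrightarrow> exp (g y) = u j y"
      using covering_space_lift[OF covering_space_exp_punctured_plane sc lpc ucont] by metis
    then show ?thesis by blast
  qed
  then obtain g where g: "\<And>j. continuous_on C (g j)" "\<And>j y. y \<in> C \<Longrightarrow> exp (g j y) = u j y"
    by metis
  define f where "f y = (\<chi> j. Im (g j y) / (2 * pi))" for y
  have fcont: "continuous_on C f" unfolding f_def
    by (intro continuous_on_vec_lambda continuous_intros g(1)) simp
  have fint: "f y - rep_torus (fb y) \<in> Zvec" if y: "y \<in> C" for y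
  proof -
    have "(f y - rep_torus (fb y)) $ j \<in> \<int>" for j
    proof -
      have "exp (g j y) = exp (2 * of_real pi * \<i> * complex_of_real (rep_torus (fb y) $ j))"
        using g(2)[OF y] by (simp add: u_def)
      then obtain n :: int where "g j y = 2 * of_real pi * \<i> * complex_of_real (rep_torus (fb y) $ j) + complex_of_real (real_of_int (2 * n) * pi) * \<i>"
        using exp_eq by blast
      then have "Im (g j y) = 2 * pi * rep_torus (fb y) $ j + 2 * n * pi" by simp
      then have "Im (g j y) / (2 * pi) = rep_torus (fb y) $ j + n" by (simp add: field_simps)
      then show ?thesis by (simp add: f_def)
    qed
    then show ?thesis by (simp add: Zvec_def)
  qed
  have "smooth_map C f" unfolding smooth_map_def
  proof
    fix x assume x: "x \<in> C"
    then obtain U and F :: "'n \<Rightarrow> real^'p" where UF: "open U" "x \<in> U" "Cinf_on U F" "\<forall>y\<in>C \<inter> U. fb y = abs_torus (F y)"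
      using sm unfolding smooth_map_T_def by blast
    define D where "D y = f y - F y" for y
    have DZ: "D y \<in> Zvec" if "y \<in> C \<inter> U" for y
    proof -
      have "rep_torus (fb y) - F y \<in> Zvec" using UF(4) that tq_rep_abs by metis
      then have "(f y - rep_torus (fb y)) + (rep_torus (fb y) - F y) \<in> Zvec"
        using fint that Zvec_add by blast
      then show ?thesis by (simp add: D_def)
    qed
    have "continuous (at x within C) f"
      using fcont x continuous_on_eq_continuous_within by blast
    then have c1: "continuous (at x within C \<inter> U) f"
      by (rule continuous_within_subset) blast
    have "continuous (at x) F" using Cinf_cont[OF UF(3)] UF(1,2) continuous_on_eq_continuous_at by blast
    then have "continuous (at x within C \<inter> U) F" using continuous_at_imp_continuous_within by blast
    with c1 have "continuous (at x within C \<inter> U) D" unfolding D_def by (intro continuous_intros)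
    then obtain \<delta> where \<delta>: "\<delta> > 0" "\<forall>y\<in>C \<inter> U. dist y x < \<delta> \<longrightarrow> dist (D y) (D x) < 1"
      unfolding continuous_within_eps_delta by (meson zero_less_one)
    have Deq: "D y = D x" if "y \<in> C \<inter> U" "dist y x < \<delta>" for y
    proof -
      have "D y - D x \<in> Zvec" using DZ that x UF(2) Zvec_diff by blast
      moreover have "norm (D y - D x) < 1" using \<delta> that by (simp add: dist_norm)
      ultimately show ?thesis using Zvec_small by fastforce
    qed
    let ?U = "U \<inter> ball x \<delta>"
    have "open ?U" "x \<in> ?U" using UF \<delta> by auto
    moreover have "Cinf_on ?U (\<lambda>y. F y + D x)"
      using Cinf_add_const[OF \<open>open ?U\<close> Cinf_subset[OF \<open>open ?U\<close> _ UF(3)]] by blast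
    moreover have "\<forall>y\<in>C \<inter> ?U. f y = F y + D x"
    proof
      fix y assume "y \<in> C \<inter> ?U"
      then have "D y = D x" using Deq by (auto simp: dist_commute)
      then show "f y = F y + D x" by (simp add: D_def algebra_simps)
    qed
    ultimately show "\<exists>U F. open U \<and> x \<in> U \<and> Cinf_on U F \<and> (\<forall>y\<in>C \<inter> U. f y = F y)" by blast
  qed
  then show ?thesis using fint by blast
qed



lemma aut_R_app: "x \<in> C \<Longrightarrow> aut_R C A f \<phi> (a, x) = (A *v a + f x, \<phi> x)"
  by (simp add: aut_R_def)

lemma redP_aut_R: "x \<in> C \<Longrightarrow> redP C (aut_R C A f \<phi>) (ab, x) = (abs_torus (A *v rep_torus ab + f x), \<phi> x)"
  by (simp add: redP_def aut_R_def)

lemma aut_R_cong: "(\<And>x. x \<in> C \<Longrightarrow> f x = f' x \<and> \<phi> x = \<phi>' x) \<Longrightarrow> aut_R C A f \<phi> = aut_R C A f' \<phi>'"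
  by (auto simp: aut_R_def fun_eq_iff)

lemma redP_lift: assumes "\<forall>y\<in>C. f y - rep_torus (fb y) \<in> Zvec"
  shows "redP C (aut_R C A f \<phi>) = aut_T C A fb \<phi>"
proof (rule ext, clarify)
  fix ab x
  show "redP C (aut_R C A f \<phi>) (ab, x) = aut_T C A fb \<phi> (ab, x)"
  proof (cases "x \<in> C")
    case True
    have "(A *v rep_torus ab + f x) - (A *v rep_torus ab + rep_torus (fb x)) \<in> Zvec"
      using assms True by simp
    then have "abs_torus (A *v rep_torus ab + f x) = abs_torus (A *v rep_torus ab + rep_torus (fb x))"
      using tq_eq by blast
    then show ?thesis using True by (simp add: redP_aut_R aut_T_def)
  next
    case False
    then show ?thesis by (simp add: redP_def aut_T_def)
  qed
qed

lemma restrC_redP: "x \<in> C \<Longrightarrow> restrC (redP C (aut_R C A f \<phi>)) x = \<phi> x"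
  by (simp add: restrC_def redP_aut_R)

lemma idT_redP: "redP C (aut_R C (mat 1) (\<lambda>_. 0) (\<lambda>x. x)) = idT C"
  by (auto simp: fun_eq_iff redP_def aut_R_def idT_def tq_abs_rep)

lemma aut_R_id: "aut_R C (mat 1) (\<lambda>_. 0) (\<lambda>x. x) = idR C"
  by (auto simp: fun_eq_iff aut_R_def idR_def)

lemma mat1_GLZ: "(mat 1 :: real^'p^'p) \<in> GLZ"
proof -
  have "\<forall>i j. (mat 1 :: real^'p^'p) $ i $ j \<in> \<int>" by (simp add: mat_def)
  moreover have "invertible (mat 1 :: real^'p^'p)" by (simp add: invertible_def)
  moreover have "matrix_inv (mat 1 :: real^'p^'p) = mat 1"
  proof -
    have "matrix_inv (mat 1 :: real^'p^'p) ** mat 1 = mat 1"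
      unfolding matrix_inv_def by (rule someI2[of _ "mat 1"]) (auto simp: matrix_mul_lid)
    then show ?thesis by (simp add: matrix_mul_rid)
  qed
  ultimately show ?thesis by (simp add: GLZ_def mat_def)
qed

lemma same_red:
  fixes C :: "'n::euclidean_space set" and f f' :: "'n \<Rightarrow> real^'p::finite"
  assumes A: "A \<in> GLZ" "A' \<in> GLZ" and cf: "continuous_on C f" "continuous_on C f'"
    and conn: "connected C" and x0: "x0 \<in> C"
    and eq: "redP C (aut_R C A f \<phi>) = redP C (aut_R C A' f' \<phi>')"
  shows "A = A' \<and> (\<forall>x\<in>C. \<phi>' x = \<phi> x) \<and> (\<exists>k\<in>Zvec. \<forall>x\<in>C. f' x = f x + k)"
proof -
  have ev: "abs_torus (A *v rep_torus ab + f x) = abs_torus (A' *v rep_torus ab + f' x) \<and> \<phi> x = \<phi>' x"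
    if "x \<in> C" for x ab
    using fun_cong[OF eq, of "(ab, x)"] that by (simp add: redP_aut_R)
  have h1: "(A *v rep_torus ab + f x) - (A' *v rep_torus ab + f' x) \<in> Zvec" if "x \<in> C" for x ab
    using ev[OF that, of ab] tq_eq by blast
  have iA: "\<forall>i j. A $ i $ j \<in> \<int>" "\<forall>i j. A' $ i $ j \<in> \<int>" using A GLZ_int by auto
  define z0 :: "real^'p" where "z0 = rep_torus (abs_torus 0)"
  have z0: "z0 \<in> Zvec" using tq_rep_abs[of "0::real^'p"] by (simp add: z0_def)
  have fd: "f x - f' x \<in> Zvec" if x: "x \<in> C" for x
  proof -
    have "f x - f' x = ((A *v z0 + f x) - (A' *v z0 + f' x)) - A *v z0 + A' *v z0"
      by (simp add: algebra_simps)
    moreover have "(A *v z0 + f x) - (A' *v z0 + f' x) \<in> Zvec" using h1[OF x] by (simp add: z0_def)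
    ultimately show ?thesis using Zvec_mult[OF iA(1) z0] Zvec_mult[OF iA(2) z0] Zvec_add Zvec_diff
      by metis
  qed
  have iM: "\<forall>i j. (A - A') $ i $ j \<in> \<int>" using iA by auto
  have "(A - A') *v v \<in> Zvec" for v
  proof -
    define r where "r = rep_torus (abs_torus v)"
    have rz: "r - v \<in> Zvec" using tq_rep_abs by (simp add: r_def)
    have "(A - A') *v r = ((A *v r + f x0) - (A' *v r + f' x0)) - (f x0 - f' x0)"
      by (simp add: matrix_vector_mult_diff_rdistrib algebra_simps)
    moreover have "((A *v r + f x0) - (A' *v r + f' x0)) \<in> Zvec" using h1[OF x0, of "abs_torus v"] by (simp add: r_def)
    ultimately have "(A - A') *v r \<in> Zvec" using fd[OF x0] Zvec_diff by metis
    moreover have "(A - A') *v v = (A - A') *v r - (A - A') *v (r - v)"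
      by (simp add: matrix_vector_mult_diff_distrib)
    ultimately show ?thesis using Zvec_mult[OF iM rz] Zvec_diff by metis
  qed
  then have "A - A' = 0" by (rule mat_zero_if_Zvec)
  then have AA: "A = A'" by simp
  define D where "D x = f' x - f x" for x
  have DZ: "D x \<in> Zvec" if "x \<in> C" for x
    using fd[OF that] Zvec_minus unfolding D_def by (metis minus_diff_eq)
  have "(\<lambda>x. D x $ i) constant_on C" for i
  proof (rule continuous_discrete_range_constant[OF conn])
    show "continuous_on C (\<lambda>x. D x $ i)" unfolding D_def using cf
      by (intro continuous_intros continuous_on_component)
    fix x assume x: "x \<in> C"
    show "\<exists>e>0. \<forall>y. y \<in> C \<and> D y $ i \<noteq> D x $ i \<longrightarrow> e \<le> norm (D y $ i - D x $ i)"
    proof (intro exI[of _ 1] conjI allI impI)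
      fix y assume y: "y \<in> C \<and> D y $ i \<noteq> D x $ i"
      have "D y $ i - D x $ i \<in> \<int>" using DZ[of x] DZ[of y] x y by (simp add: Zvec_def)
      then show "1 \<le> norm (D y $ i - D x $ i)" using Ints_nonzero_abs_less1 y by force
    qed simp
  qed
  then have "\<forall>x\<in>C. D x $ i = D x0 $ i" for i unfolding constant_on_def using x0 by metis
  then have "\<forall>x\<in>C. D x = D x0" by (simp add: vec_eq_iff)
  then obtain k where k: "\<forall>x\<in>C. D x = k" by blast
  have "k \<in> Zvec" using k x0 fd[OF x0] Zvec_minus unfolding D_def by (metis minus_diff_eq)
  moreover have "\<forall>x\<in>C. f' x = f x + k" using k unfolding D_def by (metis add_diff_cancel_left' diff_add_cancel add.commute)
  ultimately show ?thesis using AA ev by auto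
qed



theorem mainTheorem10:
  fixes C :: "'n::euclidean_space set"
    and E1 E2 :: "(real^'p::finite) set"
    and q :: nat
    and \<Omega> :: "('p torus \<times> 'n \<Rightarrow> 'p torus \<times> 'n) set"
  assumes manifold: "smooth_submanifold C"
    and simply_conn: "simply_connected C"
    and p_ge_2: "CARD('p) \<ge> 2"
    and q_ge_1: "q \<ge> 1"
    and E_decomp: "subspace E1" "subspace E2" "dim E1 = q" "E1 \<inter> E2 = {0}" "E1 + E2 = UNIV"
    and subgroup: "is_subgroup_T C \<Omega> (AutT_E C E1 E2)"
    and discrete: "discrete_T C \<Omega>"
    and H_i: "proper_on_C C \<Omega>" "cocompact_on_C C \<Omega>"
    and H_ii: "\<forall>\<omega>\<in>\<Omega>. (\<lambda>v. linpartT C \<omega> *v v) ` E1 \<subseteq> E1 \<and> (\<lambda>v. linpartT C \<omega> *v v) ` E2 \<subseteq> E2"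
    and H_iii: "\<exists>g. scalar_product_on E1 g \<and> (\<forall>\<omega>\<in>\<Omega>. similarity_on E1 g (linpartT C \<omega>)) \<and>
                    (\<exists>\<omega>\<in>\<Omega>. \<not> isometry_on E1 g (linpartT C \<omega>))"
    and H_iv: "\<forall>\<omega>\<in>\<Omega>. \<forall>x\<in>C. \<omega> \<noteq> idT C \<and> restrC \<omega> x = x \<longrightarrow>
                 (\<forall>g\<in>AutZ_E C E1 E2. redP C g = \<omega> \<longrightarrow> (\<forall>a. g (a, x) \<noteq> (a, x)))"
  shows "acts_freely C {g \<in> AutZ_E C E1 E2. redP C g \<in> \<Omega>} \<and>
         acts_properly_discontinuously C {g \<in> AutZ_E C E1 E2. redP C g \<in> \<Omega>} \<and>
         acts_cocompactly C {g \<in> AutZ_E C E1 E2. redP C g \<in> \<Omega>}"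
proof -
  let ?G = "{g \<in> AutZ_E C E1 E2. redP C g \<in> \<Omega>}"
  have conn: "connected C" using simply_conn simply_connected_imp_connected by blast
  have lpc: "locally path_connected C" using manifold by (rule submanifold_lpc)
  have \<Omega>E: "\<Omega> \<subseteq> AutT_E C E1 E2" using subgroup by (simp add: is_subgroup_T_def)
  have Gdest: "\<exists>A f \<phi>. g = aut_R C A f \<phi> \<and> A \<in> GLZ \<and> smooth_map C f \<and> diffeo C \<phi>" if "g \<in> ?G" for g
    using that by (auto simp: AutZ_E_def)
  have free: "acts_freely C ?G"
    unfolding acts_freely_def
  proof (intro ballI allI impI)
    fix g a x assume g: "g \<in> ?G" and x: "x \<in> C" and fx: "g (a, x) = (a, x)"
    obtain A f \<phi> where gA: "g = aut_R C A f \<phi>" "A \<in> GLZ" "smooth_map C f" "diffeo C \<phi>"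
      using Gdest[OF g] by blast
    have fx2: "A *v a + f x = a" "\<phi> x = x" using fx x by (simp_all add: gA aut_R_app)
    show "g = idR C"
    proof (cases "redP C g = idT C")
      case False
      have "restrC (redP C g) x = x" using x fx2 by (simp add: gA restrC_redP)
      then have "\<forall>a. g (a, x) \<noteq> (a, x)" using H_iv g x False by blast
      then show ?thesis using fx by blast
    next
      case True
      have "redP C (aut_R C (mat 1) (\<lambda>_. 0) (\<lambda>x. x)) = redP C (aut_R C A f \<phi>)"
        using True by (simp add: gA idT_redP)
      from same_red[OF mat1_GLZ gA(2) continuous_on_const smooth_map_cont[OF gA(3)] conn x this]
      obtain k where k: "mat 1 = A" "\<forall>y\<in>C. \<phi> y = y" "k \<in> Zvec" "\<forall>y\<in>C. f y = 0 + k" by blast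
      have "f x = 0" using fx2(1) k(1) by (metis matrix_vector_mul_lid add_cancel_right_right)
      then have "k = 0" using k(4) x by simp
      then have "aut_R C A f \<phi> = aut_R C A (\<lambda>_. 0) (\<lambda>x. x)"
        using k by (intro aut_R_cong) auto
      then have "g = aut_R C (mat 1) (\<lambda>_. 0) (\<lambda>x. x)" using gA(1) k(1) by simp
      then show ?thesis by (simp add: aut_R_id)
    qed
  qed
  have proper: "acts_properly_discontinuously C ?G"
    unfolding acts_properly_discontinuously_def
  proof (intro allI impI)
    fix K :: "((real^'p) \<times> 'n) set" assume K: "compact K \<and> K \<subseteq> UNIV \<times> C"
    define KC where "KC = snd ` K"
    have cs: "continuous_on K snd" using continuous_on_snd[OF continuous_on_id] by simp
    have cfs: "continuous_on K fst" using continuous_on_fst[OF continuous_on_id] by simp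
    have KC: "compact KC" "KC \<subseteq> C" using K compact_continuous_image[OF cs] unfolding KC_def
      by auto
    define F where "F = {\<omega>\<in>\<Omega>. restrC \<omega> ` KC \<inter> KC \<noteq> {}}"
    have finF: "finite F" using H_i(1) KC unfolding proper_on_C_def F_def by blast
    define S where "S \<omega> = {g \<in> ?G. redP C g = \<omega> \<and> g ` K \<inter> K \<noteq> {}}" for \<omega>
    have sub: "{g \<in> ?G. g ` K \<inter> K \<noteq> {}} \<subseteq> (\<Union>\<omega>\<in>F. S \<omega>)"
    proof
      fix g assume "g \<in> {g \<in> ?G. g ` K \<inter> K \<noteq> {}}"
      then have g: "g \<in> ?G" "g ` K \<inter> K \<noteq> {}" by auto
      obtain A f \<phi> where gA: "g = aut_R C A f \<phi>" "A \<in> GLZ" "smooth_map C f" "diffeo C \<phi>"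
        using Gdest[OF g(1)] by blast
      obtain a x where ax: "(a, x) \<in> K" "g (a, x) \<in> K" using g(2) by auto
      have x: "x \<in> C" using ax K by auto
      have "\<phi> x \<in> KC" using ax(2) x unfolding KC_def gA by (force simp: aut_R_app)
      moreover have "x \<in> KC" using ax(1) unfolding KC_def by force
      moreover have "restrC (redP C g) x = \<phi> x" using x by (simp add: gA restrC_redP)
      ultimately have "\<phi> x \<in> restrC (redP C g) ` KC \<inter> KC" by (metis IntI image_eqI)
      moreover have "redP C g \<in> \<Omega>" using g(1) by simp
      ultimately have "redP C g \<in> F" unfolding F_def by (metis (mono_tags, lifting) empty_iff mem_Collect_eq)
      then show "g \<in> (\<Union>\<omega>\<in>F. S \<omega>)" using g unfolding S_def by blast
    qed
    have finS: "finite (S \<omega>)" for \<omega>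
    proof (cases "S \<omega> = {}")
      case True then show ?thesis by simp
    next
      case False
      then obtain g0 where g0: "g0 \<in> S \<omega>" by blast
      then have g0G: "g0 \<in> ?G" "redP C g0 = \<omega>" unfolding S_def by auto
      obtain A0 f0 \<phi>0 where gA0: "g0 = aut_R C A0 f0 \<phi>0" "A0 \<in> GLZ" "smooth_map C f0" "diffeo C \<phi>0"
        using Gdest[OF g0G(1)] by blast
      have cf0: "continuous_on C f0" using smooth_map_cont[OF gA0(3)] .
      define h where "h z = A0 *v fst z + f0 (snd z)" for z :: "(real^'p) \<times> 'n"
      have cA: "continuous_on UNIV ((*v) A0)"
        by (rule linear_continuous_on[OF matrix_vector_mul_bounded_linear])
      have c1: "continuous_on (UNIV \<times> C) (\<lambda>z::(real^'p) \<times> 'n. A0 *v fst z)"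
        by (rule continuous_on_compose2[OF cA continuous_on_fst[OF continuous_on_id]]) auto
      have c2: "continuous_on (UNIV \<times> C) (\<lambda>z::(real^'p) \<times> 'n. f0 (snd z))"
        by (rule continuous_on_compose2[OF cf0 continuous_on_snd[OF continuous_on_id]]) auto
      have "continuous_on (UNIV \<times> C) h" unfolding h_def
        by (rule continuous_on_add[OF c1 c2])
      then have "compact (h ` K)" using K by (auto intro: compact_continuous_image continuous_on_subset)
      moreover have "compact (fst ` K)" using K compact_continuous_image[OF cfs] by auto
      ultimately have cD: "compact {b - c |b c. b \<in> fst ` K \<and> c \<in> h ` K}"
        by (rule compact_differences[rotated])
      define Dset where "Dset = {b - c |b c. b \<in> fst ` K \<and> c \<in> h ` K}"
      have finZ: "finite (Zvec \<inter> Dset)" using cD Zvec_bounded_finite compact_imp_bounded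
        unfolding Dset_def by blast
      have "S \<omega> \<subseteq> (\<lambda>k. aut_R C A0 (\<lambda>x. f0 x + k) \<phi>0) ` (Zvec \<inter> Dset)"
      proof
        fix g assume gS: "g \<in> S \<omega>"
        then have g: "g \<in> ?G" "redP C g = \<omega>" "g ` K \<inter> K \<noteq> {}" unfolding S_def by auto
        obtain A f \<phi> where gA: "g = aut_R C A f \<phi>" "A \<in> GLZ" "smooth_map C f" "diffeo C \<phi>"
          using Gdest[OF g(1)] by blast
        obtain a x where ax: "(a, x) \<in> K" "g (a, x) \<in> K" using g(3) by auto
        have x: "x \<in> C" using ax K by auto
        have "redP C (aut_R C A0 f0 \<phi>0) = redP C (aut_R C A f \<phi>)" using g0G(2) g(2) gA(1) gA0(1) by simp
        from same_red[OF gA0(2) gA(2) cf0 smooth_map_cont[OF gA(3)] conn x this]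
        obtain k where k: "A0 = A" "\<forall>y\<in>C. \<phi> y = \<phi>0 y" "k \<in> Zvec" "\<forall>y\<in>C. f y = f0 y + k" by blast
        have "aut_R C A f \<phi> = aut_R C A (\<lambda>x. f0 x + k) \<phi>0" using k by (intro aut_R_cong) auto
        then have geq: "g = aut_R C A0 (\<lambda>x. f0 x + k) \<phi>0" using gA(1) k(1) by simp
        have "g (a, x) = (A0 *v a + f0 x + k, \<phi>0 x)" using x by (simp add: geq aut_R_app)
        then have "A0 *v a + f0 x + k \<in> fst ` K" using ax(2) by (metis fst_conv image_eqI)
        moreover have "A0 *v a + f0 x \<in> h ` K" using ax(1) unfolding h_def by force
        ultimately have "k \<in> Dset" unfolding Dset_def
          by (intro CollectI exI[of _ "A0 *v a + f0 x + k"] exI[of _ "A0 *v a + f0 x"]) simp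
        then show "g \<in> (\<lambda>k. aut_R C A0 (\<lambda>x. f0 x + k) \<phi>0) ` (Zvec \<inter> Dset)"
          using k(3) geq by blast
      qed
      then show ?thesis using finZ finite_subset by blast
    qed
    show "finite {g \<in> ?G. g ` K \<inter> K \<noteq> {}}"
      by (rule finite_subset[OF sub]) (use finF finS in blast)
  qed
  have cocompact: "acts_cocompactly C ?G"
  proof -
    obtain KC where KC: "compact KC" "KC \<subseteq> C" "C = (\<Union>\<omega>\<in>\<Omega>. restrC \<omega> ` KC)"
      using H_i(2) unfolding cocompact_on_C_def by blast
    define K where "K = cbox (0::real^'p) (vec 1) \<times> KC"
    have cK: "compact K" unfolding K_def using KC(1) by (intro compact_Times compact_cbox)
    have sK: "K \<subseteq> UNIV \<times> C" using KC(2) by (auto simp: K_def)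
    have "UNIV \<times> C = (\<Union>g\<in>?G. g ` K)"
    proof
      show "(\<Union>g\<in>?G. g ` K) \<subseteq> UNIV \<times> C"
      proof (rule subsetI)
        fix z assume "z \<in> (\<Union>g\<in>?G. g ` K)"
        then obtain g w where g: "g \<in> ?G" and w: "w \<in> K" and zw: "z = g w" by blast
        obtain b x where bx0: "w = (b, x)" by (cases w)
        have bx: "(b, x) \<in> K" using w bx0 by simp
        obtain c y where eq0: "z = (c, y)" by (cases z)
        have eq: "(c, y) = g (b, x)" using zw eq0 bx0 by simp
        obtain A f \<phi> where gA: "g = aut_R C A f \<phi>" "A \<in> GLZ" "smooth_map C f" "diffeo C \<phi>"
          using Gdest[OF g] by blast
        have x: "x \<in> C" using bx sK by auto
        have "\<phi> ` C = C" using gA(4) unfolding diffeo_def by (simp add: bij_betw_imp_surj_on)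
        then have "\<phi> x \<in> C" using x by blast
        then have "y \<in> C" using eq x by (simp add: gA aut_R_app)
        then show "z \<in> UNIV \<times> C" using eq0 by simp
      qed
    next
      show "UNIV \<times> C \<subseteq> (\<Union>g\<in>?G. g ` K)"
      proof clarify
        fix a y assume y: "y \<in> C"
        then obtain \<omega> x where \<omega>: "\<omega> \<in> \<Omega>" "x \<in> KC" "y = restrC \<omega> x" using KC(3) by blast
        have x: "x \<in> C" using \<omega>(2) KC(2) by blast
        have "\<omega> \<in> AutT_E C E1 E2" using \<Omega>E \<omega>(1) by blast
        then have \<omega>T: "\<omega> \<in> AutT C" and lifts: "\<forall>g \<in> AutR C. redP C g = \<omega> \<longrightarrow> g \<in> AutZ_E C E1 E2"
          unfolding AutT_E_def by auto
        obtain A fb \<phi> where \<omega>A: "\<omega> = aut_T C A fb \<phi>" "A \<in> GLZ" "smooth_map_T C fb" "diffeo C \<phi>"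
          using \<omega>T unfolding AutT_def by blast
        obtain f where f: "smooth_map C f" "\<forall>y\<in>C. f y - rep_torus (fb y) \<in> Zvec"
          using torus_lift[OF \<omega>A(3) simply_conn lpc] by blast
        have yphi: "y = \<phi> x" using \<omega>(3) x by (simp add: \<omega>A(1) restrC_def aut_T_def)
        have invA: "invertible A" using \<omega>A(2) by (simp add: GLZ_def)
        then obtain A' where A': "A ** A' = mat 1" unfolding invertible_def by blast
        define b' where "b' = A' *v (a - f x)"
        define kf :: "real^'p" where "kf = (\<chi> i. of_int (floor (b' $ i)))"
        define b where "b = b' - kf"
        define f2 where "f2 y = f y + A *v kf" for y
        have kfZ: "kf \<in> Zvec" by (simp add: kf_def Zvec_def)
        define g where "g = aut_R C A f2 \<phi>"
        have "g \<in> AutR C" unfolding g_def AutR_def f2_def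
          using invA smooth_map_add_const[OF f(1)] \<omega>A(4) by blast
        moreover have "redP C g = \<omega>"
        proof -
          have "\<forall>y\<in>C. f2 y - rep_torus (fb y) \<in> Zvec"
          proof
            fix y assume "y \<in> C"
            then have "(f y - rep_torus (fb y)) + A *v kf \<in> Zvec"
              using f(2) Zvec_add Zvec_mult[OF GLZ_int[OF \<omega>A(2)] kfZ] by blast
            then show "f2 y - rep_torus (fb y) \<in> Zvec" by (simp add: f2_def algebra_simps)
          qed
          then show ?thesis unfolding g_def \<omega>A(1) by (rule redP_lift)
        qed
        ultimately have gG: "g \<in> ?G" using lifts \<omega>(1) by auto
        have "b \<in> cbox 0 (vec 1)"
          unfolding mem_box_cart
        proof
          fix i
          have "b $ i = frac (b' $ i)" by (simp add: b_def kf_def frac_def)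
          then show "(0::real^'p) $ i \<le> b $ i \<and> b $ i \<le> vec 1 $ i"
            using frac_ge_0[of "b' $ i"] frac_lt_1[of "b' $ i"] by (simp add: less_imp_le)
        qed
        then have bK: "(b, x) \<in> K" using \<omega>(2) by (simp add: K_def)
        have "A *v b + f2 x = A *v (b + kf) + f x" by (simp add: f2_def matrix_vector_right_distrib algebra_simps)
        also have "\<dots> = A *v b' + f x" by (simp add: b_def)
        also have "\<dots> = (a - f x) + f x" by (simp add: b'_def matrix_vector_mul_assoc A')
        finally have "g (b, x) = (a, y)" using x yphi by (simp add: g_def aut_R_app)
        then show "(a, y) \<in> (\<Union>g\<in>?G. g ` K)" using gG bK by force
      qed
    qed
    then show ?thesis unfolding acts_cocompactly_def using cK sK by blast
  qed
  show ?thesis using free proper cocompact by blast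
qed


end
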